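(* In the setting of the context, let $z^\odot\in\overline{\mathbb{U}}$ be such that the stable root $\kappa_s$ extends continuously to $z^\odot$ with value $\kappa_s(z^\odot)$, and suppose $\lim_{z\to z^\odot,\,z\in\mathbb{U}}\langle KL\rangle(z)=0$. Then $(z^\odot,\kappa_s(z^\odot))$ is a shared eigenvalue between bulk and boundary scheme, i.e. $\det\big(z^\odot I_q-\sum_{\ell=0}^{w}B_{0,\ell}\kappa_s(z^\odot)^\ell\big)=0$ (in addition to $\kappa_s(z^\odot)$ being a root of the bulk characteristic equation at $z^\odot$).
   Context: Notation: $\mathbb{D}=\{|z|<1\}$, $\mathbb{U}=\{|z|>1\}$, $\overline{\mathbb{U}}=\{|z|\geq1\}$; $e_i$ canonical basis vectors. Data: $q\geq2$, pairwise distinct velocities $c_i\in\mathbb{Z}$ with $\max_ic_i=1$ and $\pi$ the unique index with $c_\pi=1$; invertible $M\in\mathbb{R}^{q\times q}$; $s_1\in\mathbb{R}$, $s_2,\dots,s_q\in(0,2]$; $\epsilon\in\mathbb{R}^q$, $\epsilon_1=1$; $K:=I_q+\mathrm{diag}(s_1,\dots,s_q)(\epsilon e_1^{\mathsf T}-I_q)$; $\hat E(\kappa):=M\mathrm{diag}(\kappa^{-c_1},\dots,\kappa^{-c_q})M^{-1}K$. The scheme is von Neumann stable ($\mathrm{sp}\hat E(e^{i\vartheta})\subset\{|z|\le1\}$ for all real $\vartheta$), and $\det(zI_q-\hat E(\kappa))=d_{-1}(z)\kappa^{-1}+\sum_{\ell=0}^{\bar p}d_\ell(z)\kappa^\ell$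 with $d_{-1}\not\equiv0$. For $z\in\mathbb{U}$, $\kappa_s(z)\in\mathbb{D}$ is the stable root of $\det(zI_q-\hat E(\kappa))=0$, and $\varphi_s(z)$ spans $\ker(zI_q-\hat E(\kappa_s(z)))$, normalized so that its first component equals $1$. Kinetic boundary condition at the ghost point: $f^{n\star}_{\pi,-1}=\sum_{\ell=1}^q\sum_{h=0}^{w}b_{\pi,\ell,1,h}f^{n\star}_{\ell,h}+g^n_{\pi,-1}$ (distribution functions $f=M^{-1}m$), giving boundary matrices $B_{0,\ell}:=M\big(\sum_{i:\,c_i=-\ell}e_ie_i^{\mathsf T}+e_\pi\sum_{h=1}^qb_{\pi,h,1,\ell}e_h^{\mathsf T}\big)M^{-1}K$, $\ell=0,\dots,w$. The Kreiss–Lopatinskii scalar product is $\langle KL\rangle(z):=\big(e_\pi^{\mathsf T}\kappa_s(z)^{-1}-\sum_{\ell=0}^{w}\sum_{h=1}^qe_h^{\mathsf T}b_{\pi,h,1,\ell}\kappa_s(z)^\ell\big)M^{-1}K\varphi_s(z)$. *)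

theory Defs
  imports "HOL-Analysis.Analysis" "HOL-Computational_Algebra.Polynomial"
begin

text \<open>Velocity / distribution indices range over a finite type 'q (q = CARD('q)).
  The distinguished index i1 plays the role of the first index "1".\<close>

definition cmat :: "real^'n^'m \<Rightarrow> complex^'n^'m" where
  "cmat A = (\<chi> i j. complex_of_real (A $ i $ j))"

text \<open>K = I + diag(s)(eps e_1^T - I).\<close>
definition Kmat :: "'q::finite \<Rightarrow> ('q \<Rightarrow> real) \<Rightarrow> ('q \<Rightarrow> real) \<Rightarrow> real^'q^'q" where
  "Kmat i1 s eps = (\<chi> i j. (if i = j then 1 else 0)
      + s i * (eps i * (if j = i1 then 1 else 0) - (if i = j then 1 else 0)))"

definition Ehat :: "real^'q^'q \<Rightarrow> ('q::finite \<Rightarrow> int) \<Rightarrow> real^'q^'q \<Rightarrow> complex \<Rightarrow> complex^'q^'q" where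
  "Ehat M c K \<kappa> = cmat M ** (\<chi> i j. if i = j then \<kappa> powi (- c i) else 0)
      ** cmat (matrix_inv M) ** cmat K"

text \<open>Boundary matrices B_{0,l}; b h l stands for b_{pi,h,1,l}.\<close>
definition Bmat :: "real^'q^'q \<Rightarrow> ('q::finite \<Rightarrow> int) \<Rightarrow> ('q \<Rightarrow> nat \<Rightarrow> real) \<Rightarrow> 'q
      \<Rightarrow> real^'q^'q \<Rightarrow> nat \<Rightarrow> complex^'q^'q" where
  "Bmat M c b p K l = cmat M ** (\<chi> i j. (if i = j \<and> c i = - int l then 1 else 0)
      + (if i = p then complex_of_real (b j l) else 0)) ** cmat (matrix_inv M) ** cmat K"

definition KLprod :: "real^'q^'q \<Rightarrow> real^'q^'q \<Rightarrow> ('q::finite \<Rightarrow> nat \<Rightarrow> real) \<Rightarrow> 'q \<Rightarrow> nat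
      \<Rightarrow> complex \<Rightarrow> complex^'q \<Rightarrow> complex" where
  "KLprod M K b p w \<kappa> \<phi> =
     (let \<psi> = (cmat (matrix_inv M) ** cmat K) *v \<phi> in
       \<psi> $ p / \<kappa> - (\<Sum>l\<le>w. \<Sum>h\<in>UNIV. complex_of_real (b h l) * \<kappa> ^ l * \<psi> $ h))"

end

theory Submission
  imports Defs
begin

lemma ifz_mult: "(if P then a else 0) * (b::'a::semiring_0) = (if P then a * b else 0)" by simp

lemma mv_sum: "(\<Sum>l\<in>S. A l) *v (x::'a::comm_ring_1^'n) = (\<Sum>l\<in>S. A l *v x)"
  by (induct S rule: infinite_finite_induct) (simp_all add: matrix_vector_mult_add_rdistrib)

lemma mv_sum_r: "A *v (\<Sum>l\<in>S. f l) = (\<Sum>l\<in>S. A *v (f l :: 'a::comm_ring_1^'n))"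
  by (induct S rule: infinite_finite_induct) (simp_all add: matrix_vector_right_distrib)

lemma mv_smult_r: "A *v (a *s (x::'a::comm_ring_1^'n)) = a *s (A *v x)"
  by (simp add: vec_eq_iff matrix_vector_mult_def sum_distrib_left mult.left_commute)

lemma mat_mult_entry: "(mat a ** (A::'a::comm_ring_1^'n^'m)) $ i $ j = a * A $ i $ j"
  by (simp add: matrix_matrix_mult_def mat_def ifz_mult)

lemma mv_mat_mult: "(mat a ** A) *v (x::'a::comm_ring_1^'n) = a *s (A *v x)"
  by (simp add: vec_eq_iff matrix_vector_mult_def mat_mult_entry sum_distrib_left mult.assoc)

lemma mv_mat: "mat a *v (x::'a::comm_ring_1^'n) = a *s x"
  by (simp add: vec_eq_iff matrix_vector_mult_def mat_def ifz_mult)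

lemma tendsto_det:
  assumes "\<And>i j. ((\<lambda>x. A x $ i $ j) \<longlongrightarrow> B $ i $ j) F"
  shows "((\<lambda>x. det (A x)) \<longlongrightarrow> det (B::complex^'n^'n)) F"
  unfolding det_def by (intro tendsto_intros assms)

lemma diag_mv: "((\<chi> i j. if i = j then f i else 0) *v (x::'a::comm_ring_1^'n)) $ i = f i * x $ i"
  by (simp add: matrix_vector_mult_def ifz_mult)

lemma Xmv: "((\<chi> i j. (if i = j \<and> c i = - int l then 1 else 0) + (if i = p then complex_of_real (b j l) else 0)) *v \<psi>) $ i
   = (if c i = - int l then \<psi> $ i else 0) + (if i = p then (\<Sum>j\<in>UNIV. complex_of_real (b j l) * \<psi> $ j) else 0)"
  by (simp add: matrix_vector_mult_def distrib_right sum.distrib ifz_mult cong: if_cong)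

lemma middle:
  fixes c :: "'q::finite \<Rightarrow> int" and \<kappa> :: complex
  assumes c_inj: "inj c" and c_max: "\<forall>i. c i \<le> 1" and c_p: "c p = 1"
    and w_ge: "\<forall>i. - c i \<le> int w" and k0: "\<kappa> \<noteq> 0"
  shows "(\<chi> i j. if i = j then \<kappa> powi (- c i) else 0) *v \<psi>
     - (\<Sum>l\<le>w. \<kappa>^l *s ((\<chi> i j. (if i = j \<and> c i = - int l then 1 else 0)
            + (if i = p then complex_of_real (b j l) else 0)) *v \<psi>))
     = (\<psi>$p/\<kappa> - (\<Sum>l\<le>w. \<Sum>h\<in>UNIV. complex_of_real (b h l) * \<kappa> ^ l * \<psi> $ h)) *s axis p 1"
proof (subst vec_eq_iff, intro allI)
  fix i
  show "((\<chi> i j. if i = j then \<kappa> powi (- c i) else 0) *v \<psi>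
     - (\<Sum>l\<le>w. \<kappa>^l *s ((\<chi> i j. (if i = j \<and> c i = - int l then 1 else 0)
            + (if i = p then complex_of_real (b j l) else 0)) *v \<psi>))) $ i
     = ((\<psi>$p/\<kappa> - (\<Sum>l\<le>w. \<Sum>h\<in>UNIV. complex_of_real (b h l) * \<kappa> ^ l * \<psi> $ h)) *s axis p 1) $ i"
  proof (cases "i = p")
    case True
    have ne: "\<And>l::nat. c p \<noteq> - int l" using c_p by simp
    show ?thesis using True
      by (simp add: diag_mv Xmv ne c_p power_int_def axis_def sum_distrib_left
          mult_ac divide_inverse)
  next
    case False
    have "c i \<noteq> 1" using c_inj c_p False by (metis injD)
    then have ci: "c i \<le> 0" using c_max by (metis int_one_le_iff_zero_less not_le order_antisym)
    define n where "n = nat (- c i)"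
    have cn: "c i = - int n" using ci n_def by simp
    have nw: "n \<le> w" using w_ge cn by (metis of_nat_le_iff minus_minus)
    have "(\<Sum>l\<le>w. \<kappa>^l * (if c i = - int l then \<psi> $ i else 0)) = \<kappa>^n * \<psi> $ i"
    proof -
      have "(\<lambda>l. \<kappa>^l * (if c i = - int l then \<psi> $ i else 0)) = (\<lambda>l. if l = n then \<kappa>^n * \<psi> $ i else 0)"
        using cn by (auto simp: fun_eq_iff)
      then show ?thesis using nw by (simp only: sum.delta finite_atMost atMost_iff if_True)
    qed
    then show ?thesis using False
      by (simp add: diag_mv Xmv cn axis_def power_int_def)
  qed
qed

lemma Nphi:
  fixes c :: "'q::finite \<Rightarrow> int" and \<kappa> :: complex
  assumes c_inj: "inj c" and c_max: "\<forall>i. c i \<le> 1" and c_p: "c p = 1"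
    and w_ge: "\<forall>i. - c i \<le> int w" and k0: "\<kappa> \<noteq> 0"
    and ker: "(mat z - Ehat M c K \<kappa>) *v \<phi> = 0"
  shows "(mat z - (\<Sum>l\<le>w. mat (\<kappa>^l) ** Bmat M c b p K l)) *v \<phi>
     = KLprod M K b p w \<kappa> \<phi> *s (cmat M *v axis p 1)"
proof -
  define \<psi> where "\<psi> = cmat (matrix_inv M) *v (cmat K *v \<phi>)"
  define D where "D = (\<chi> i j. if i = j then \<kappa> powi (- c i) else (0::complex))"
  define X where "X = (\<lambda>l. (\<chi> i j. (if i = j \<and> c i = - int l then 1 else 0)
            + (if i = p then complex_of_real (b j l) else 0)) :: complex^'q^'q)"
  have E: "Ehat M c K \<kappa> *v \<phi> = cmat M *v (D *v \<psi>)"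
    by (simp add: Ehat_def D_def \<psi>_def matrix_vector_mul_assoc matrix_mul_assoc)
  have B: "\<And>l. Bmat M c b p K l *v \<phi> = cmat M *v (X l *v \<psi>)"
    by (simp add: Bmat_def X_def \<psi>_def matrix_vector_mul_assoc matrix_mul_assoc)
  have zphi: "mat z *v \<phi> = Ehat M c K \<kappa> *v \<phi>"
    using ker by (simp add: matrix_vector_mult_diff_rdistrib)
  have KL: "KLprod M K b p w \<kappa> \<phi> = \<psi>$p/\<kappa> - (\<Sum>l\<le>w. \<Sum>h\<in>UNIV. complex_of_real (b h l) * \<kappa> ^ l * \<psi> $ h)"
    by (simp only: KLprod_def \<psi>_def matrix_vector_mul_assoc Let_def)
  have "(mat z - (\<Sum>l\<le>w. mat (\<kappa>^l) ** Bmat M c b p K l)) *v \<phi>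
      = cmat M *v (D *v \<psi>) - (\<Sum>l\<le>w. \<kappa>^l *s (cmat M *v (X l *v \<psi>)))"
    by (simp add: matrix_vector_mult_diff_rdistrib mv_sum mv_mat_mult zphi E B)
  also have "\<dots> = cmat M *v (D *v \<psi> - (\<Sum>l\<le>w. \<kappa>^l *s (X l *v \<psi>)))"
    by (simp add: mv_smult_r mv_sum_r matrix_vector_mult_diff_distrib)
  also have "D *v \<psi> - (\<Sum>l\<le>w. \<kappa>^l *s (X l *v \<psi>)) = KLprod M K b p w \<kappa> \<phi> *s axis p 1"
    unfolding KL D_def X_def by (rule middle[OF c_inj c_max c_p w_ge k0])
  finally show ?thesis by (simp add: mv_smult_r)
qed

lemma N_entry: "(mat x - (\<Sum>l\<le>w. mat (k^l) ** Bmat M c b p K l)) $ i $ j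
   = (if i = j then x else 0) - (\<Sum>l\<le>w. k^l * Bmat M c b p K l $ i $ j)"
  by (simp only: vector_minus_component sum_component mat_mult_entry) (simp add: mat_def)

lemma islimpt_U: "cmod (z0::complex) \<ge> 1 \<Longrightarrow> z0 islimpt {z. cmod z > 1}"
proof (unfold islimpt_approachable, intro allI impI)
  fix e :: real assume z0: "cmod z0 \<ge> 1" and e: "e > 0"
  define x where "x = complex_of_real (1 + e / (2 * cmod z0)) * z0"
  have n0: "cmod z0 > 0" using z0 by linarith
  have "cmod x = (1 + e / (2 * cmod z0)) * cmod z0"
    unfolding x_def norm_mult norm_of_real using e n0 by (simp del: of_real_add of_real_divide)
  also have "\<dots> = cmod z0 + e/2" using n0 by (simp add: field_simps)
  finally have nx: "cmod x = cmod z0 + e/2" .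
  have "x - z0 = complex_of_real (e / (2 * cmod z0)) * z0" unfolding x_def by (simp add: algebra_simps)
  then have "dist x z0 = cmod (complex_of_real (e / (2 * cmod z0))) * cmod z0"
    by (simp only: dist_norm norm_mult)
  also have "\<dots> = e/2" unfolding norm_of_real using e n0 by simp
  finally have "dist x z0 = e/2" .
  then show "\<exists>x'\<in>{z. cmod z > 1}. x' \<noteq> z0 \<and> dist x' z0 < e"
    using nx e z0 by (intro bexI[of _ x]) auto
qed

theorem mainTheorem5:
  fixes c :: "'q::finite \<Rightarrow> int" and i1 p :: 'q
    and M :: "real^'q^'q" and s eps :: "'q \<Rightarrow> real"
    and b :: "'q \<Rightarrow> nat \<Rightarrow> real" and w :: nat
    and dm1 :: "complex poly" and d :: "nat \<Rightarrow> complex poly" and pbar :: nat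
    and \<kappa>s :: "complex \<Rightarrow> complex" and \<phi>s :: "complex \<Rightarrow> complex^'q"
    and z0 \<kappa>0 :: complex
  defines "K \<equiv> Kmat i1 s eps"
  assumes q2: "CARD('q) \<ge> 2"
    and c_inj: "inj c" and c_max: "\<forall>i. c i \<le> 1" and c_p: "c p = 1"
    and M_inv: "invertible M"
    and s_rng: "\<forall>i. i \<noteq> i1 \<longrightarrow> 0 < s i \<and> s i \<le> 2"
    and eps1: "eps i1 = 1"
    and w_ge: "\<forall>i. - c i \<le> int w"
    and vN: "\<forall>\<theta>::real. \<forall>z. det (mat z - Ehat M c K (cis \<theta>)) = 0 \<longrightarrow> cmod z \<le> 1"
    and char_expand: "\<forall>z \<kappa>. \<kappa> \<noteq> 0 \<longrightarrow>
        det (mat z - Ehat M c K \<kappa>) = poly dm1 z / \<kappa> + (\<Sum>l\<le>pbar. poly (d l) z * \<kappa> ^ l)"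
    and dm1_nz: "dm1 \<noteq> 0"
    and \<kappa>s_stable: "\<forall>z. cmod z > 1 \<longrightarrow> \<kappa>s z \<noteq> 0 \<and> cmod (\<kappa>s z) < 1
        \<and> det (mat z - Ehat M c K (\<kappa>s z)) = 0"
    and \<kappa>s_unique: "\<forall>z \<kappa>. cmod z > 1 \<and> \<kappa> \<noteq> 0 \<and> cmod \<kappa> < 1
        \<and> det (mat z - Ehat M c K \<kappa>) = 0 \<longrightarrow> \<kappa> = \<kappa>s z"
    and \<phi>s_ker: "\<forall>z. cmod z > 1 \<longrightarrow> (\<forall>v. (mat z - Ehat M c K (\<kappa>s z)) *v v = 0
        \<longleftrightarrow> (\<exists>a. v = a *s \<phi>s z))"
    and \<phi>s_norm: "\<forall>z. cmod z > 1 \<longrightarrow> \<phi>s z $ i1 = 1"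
    and z0_cl: "cmod z0 \<ge> 1"
    and \<kappa>s_ext: "(\<kappa>s \<longlongrightarrow> \<kappa>0) (at z0 within {z. cmod z > 1})"
    and \<kappa>s_val: "cmod z0 > 1 \<longrightarrow> \<kappa>0 = \<kappa>s z0"
    and KL_lim: "((\<lambda>z. KLprod M K b p w (\<kappa>s z) (\<phi>s z)) \<longlongrightarrow> 0)
        (at z0 within {z. cmod z > 1})"
  shows "det (mat z0 - (\<Sum>l\<le>w. mat (\<kappa>0 ^ l) ** Bmat M c b p K l)) = 0
     \<and> poly dm1 z0 + (\<Sum>l\<le>pbar. poly (d l) z0 * \<kappa>0 ^ (l + 1)) = 0"
proof -
  define S where "S = {z::complex. cmod z > 1}"
  define F where "F = at z0 within S"
  have Fnb: "F \<noteq> bot" unfolding F_def S_def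
    using islimpt_U[OF z0_cl] trivial_limit_within by blast
  have evS: "eventually (\<lambda>z. cmod z > 1) F"
    unfolding F_def S_def eventually_at_filter by simp
  have kt: "(\<kappa>s \<longlongrightarrow> \<kappa>0) F" using \<kappa>s_ext unfolding F_def S_def .
  have zt: "((\<lambda>z. z) \<longlongrightarrow> z0) F" unfolding F_def by (rule tendsto_ident_at)
  have KLt: "((\<lambda>z. KLprod M K b p w (\<kappa>s z) (\<phi>s z)) \<longlongrightarrow> 0) F" using KL_lim unfolding F_def S_def .
  have e2: "eventually (\<lambda>z. poly dm1 z + (\<Sum>l\<le>pbar. poly (d l) z * \<kappa>s z ^ (l + 1)) = 0) F"
    using evS
  proof (rule eventually_mono)
    fix z :: complex assume z: "cmod z > 1"
    let ?k = "\<kappa>s z"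
    have k0: "?k \<noteq> 0" and dz: "det (mat z - Ehat M c K ?k) = 0" using \<kappa>s_stable z by auto
    have "poly dm1 z / ?k + (\<Sum>l\<le>pbar. poly (d l) z * ?k ^ l) = 0"
      using char_expand k0 dz by metis
    then have "?k * (poly dm1 z / ?k + (\<Sum>l\<le>pbar. poly (d l) z * ?k ^ l)) = 0" by simp
    then have "poly dm1 z + ?k * (\<Sum>l\<le>pbar. poly (d l) z * ?k ^ l) = 0"
      using k0 by (simp add: distrib_left)
    then show "poly dm1 z + (\<Sum>l\<le>pbar. poly (d l) z * ?k ^ (l + 1)) = 0"
      by (simp add: sum_distrib_left mult_ac)
  qed
  have t2: "((\<lambda>z. poly dm1 z + (\<Sum>l\<le>pbar. poly (d l) z * \<kappa>s z ^ (l + 1)))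
       \<longlongrightarrow> poly dm1 z0 + (\<Sum>l\<le>pbar. poly (d l) z0 * \<kappa>0 ^ (l + 1))) F"
    by (intro tendsto_intros zt kt)
  have t2': "((\<lambda>z. poly dm1 z + (\<Sum>l\<le>pbar. poly (d l) z * \<kappa>s z ^ (l + 1))) \<longlongrightarrow> 0) F"
    using e2 by (simp add: tendsto_cong[of _ "\<lambda>_. 0"] tendsto_const)
  have C2: "poly dm1 z0 + (\<Sum>l\<le>pbar. poly (d l) z0 * \<kappa>0 ^ (l + 1)) = 0"
    using tendsto_unique[OF Fnb t2 t2'] .
  define N where "N = (\<lambda>x k. mat x - (\<Sum>l\<le>w. mat (k^l) ** Bmat M c b p K l))"
  define u where "u = cmat M *v axis p (1::complex)"
  have Nphi_ev: "eventually (\<lambda>z. N z (\<kappa>s z) *v \<phi>s z = KLprod M K b p w (\<kappa>s z) (\<phi>s z) *s u) F"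
    using evS
  proof (rule eventually_mono)
    fix z :: complex assume z: "cmod z > 1"
    have k0: "\<kappa>s z \<noteq> 0" using \<kappa>s_stable z by auto
    have ker: "(mat z - Ehat M c K (\<kappa>s z)) *v \<phi>s z = 0"
      using \<phi>s_ker z by (metis scaleR_one vector_smult_lid)
    show "N z (\<kappa>s z) *v \<phi>s z = KLprod M K b p w (\<kappa>s z) (\<phi>s z) *s u"
      unfolding N_def u_def by (rule Nphi[OF c_inj c_max c_p w_ge k0 ker])
  qed
  define C where "C = (\<lambda>z. (\<chi> i j. if j = i1 then (N z (\<kappa>s z) *v \<phi>s z) $ i else N z (\<kappa>s z) $ i $ j) :: complex^'q^'q)"
  define C0 where "C0 = ((\<chi> i j. if j = i1 then 0 else N z0 \<kappa>0 $ i $ j) :: complex^'q^'q)"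
  have detC: "eventually (\<lambda>z. det (C z) = det (N z (\<kappa>s z))) F"
    using evS
  proof (rule eventually_mono)
    fix z :: complex assume z: "cmod z > 1"
    show "det (C z) = det (N z (\<kappa>s z))"
      unfolding C_def cramer_lemma using \<phi>s_norm z by simp
  qed
  have detC0: "det C0 = 0"
    by (rule det_zero_column(1)[of i1]) (simp add: C0_def column_def vec_eq_iff)
  have Nt: "\<And>i j. ((\<lambda>z. N z (\<kappa>s z) $ i $ j) \<longlongrightarrow> N z0 \<kappa>0 $ i $ j) F"
    unfolding N_def N_entry by (case_tac "i = j") (auto intro!: tendsto_intros zt kt)
  have Nvt: "\<And>i. ((\<lambda>z. (N z (\<kappa>s z) *v \<phi>s z) $ i) \<longlongrightarrow> 0) F"
  proof -
    fix i
    have "((\<lambda>z. KLprod M K b p w (\<kappa>s z) (\<phi>s z) * u $ i) \<longlongrightarrow> 0 * u $ i) F"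
      by (intro tendsto_intros KLt)
    then have "((\<lambda>z. (KLprod M K b p w (\<kappa>s z) (\<phi>s z) *s u) $ i) \<longlongrightarrow> 0) F" by simp
    then show "((\<lambda>z. (N z (\<kappa>s z) *v \<phi>s z) $ i) \<longlongrightarrow> 0) F"
      using tendsto_cong[OF eventually_mono[OF Nphi_ev]] by (smt (verit, del_insts))
  qed
  have Ct: "((\<lambda>z. det (C z)) \<longlongrightarrow> det C0) F"
  proof (rule tendsto_det)
    fix i j
    show "((\<lambda>z. C z $ i $ j) \<longlongrightarrow> C0 $ i $ j) F"
      by (cases "j = i1") (simp_all add: C_def C0_def Nt Nvt)
  qed
  have t1: "((\<lambda>z. det (N z (\<kappa>s z))) \<longlongrightarrow> 0) F"
    using Ct detC0 tendsto_cong[OF detC] by simp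
  have t1': "((\<lambda>z. det (N z (\<kappa>s z))) \<longlongrightarrow> det (N z0 \<kappa>0)) F"
    by (rule tendsto_det) (rule Nt)
  have "det (N z0 \<kappa>0) = 0" using tendsto_unique[OF Fnb t1' t1] .
  then show ?thesis using C2 unfolding N_def by simp
qed

end
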